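(* Let $u$ be a coherent utility on $L^0$ with determining set $\mathcal{D}$, and let $Y$ be a random variable or random vector. Then for every $X\in L^1_s(\mathcal{D})\cap L^1_s(\mathsf{E}(\mathcal{D}\mid Y))\cap L^1$ we have $$u^f(X;Y)=u(\mathsf{E}(X\mid Y)).$$
   Context: Let $(\Omega,\mathcal{F},\mathsf{P})$ be a probability space, $L^0$ the space of all real random variables, $L^1=L^1(\mathsf{P})$, and $\mathcal{P}$ the set of probability measures on $\mathcal{F}$ absolutely continuous with respect to $\mathsf{P}$; measures $\mathsf{Q}\in\mathcal{P}$ are identified with their densities $Z=d\mathsf{Q}/d\mathsf{P}$. For $\mathsf{Q}\in\mathcal{P}$ and $X\in L^0$, $\mathsf{E}_\mathsf{Q}X:=\mathsf{E}_\mathsf{Q}X^+-\mathsf{E}_\mathsf{Q}X^-$ with the convention $\infty-\infty=-\infty$; $\mathsf{E}$ denotes expectation under $\mathsf{P}$. A coherent utility on $L^0$ is a map $u:L^0\to[-\infty,\infty]$ of the form $u(X)=\inf_{\mathsf{Q}\in\mathcal{D}}\mathsf{E}_\mathsf{Q}X$ for a nonempty $\mathcal{D}\subseteq\mathcal{P}$; its determining set is the largest such set, namely $\{\mathsf{Q}\in\mathcal{P}:\mathsf{E}_\mathsf{Q}X\ge u(X)\ \forall X\in L^0\}$. For a set $\mathcal{C}\subseteq\mathcal{P}$, $L^1_s(\mathcal{C})=\{X\in L^0:\lim_{n\to\infty}\sup_{\mathsf{Q}\in\mathcal{C}}\mathsf{E}_\mathsf{Q}|X|I(|X|>n)=0\}$.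 For a random vector $Y$, $\mathsf{E}(\mathcal{D}\mid Y):=\{\mathsf{E}(Z\mid Y):Z\in\mathcal{D}\}$ (again a subset of $\mathcal{P}$ via densities), and the factor utility is $u^f(X;Y):=\inf_{\mathsf{Q}\in\mathsf{E}(\mathcal{D}\mid Y)}\mathsf{E}_\mathsf{Q}X$. *)

theory Defs
  imports "HOL-Probability.Probability"
begin

definition dens :: "'a measure \<Rightarrow> ('a \<Rightarrow> real) \<Rightarrow> bool" where
  "dens M Z \<longleftrightarrow> Z \<in> borel_measurable M \<and> (\<forall>x\<in>space M. 0 \<le> Z x)
      \<and> (\<integral>\<^sup>+ x. ennreal (Z x) \<partial>M) = 1"

text \<open>E_Q X = E_Q X^+ - E_Q X^- with the convention \<infinity> - \<infinity> = -\<infinity>, Q given by density Z.\<close>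
definition EQ :: "'a measure \<Rightarrow> ('a \<Rightarrow> real) \<Rightarrow> ('a \<Rightarrow> real) \<Rightarrow> ereal" where
  "EQ M Z X = (let p = (\<integral>\<^sup>+ x. ennreal (Z x * max (X x) 0) \<partial>M);
                   n = (\<integral>\<^sup>+ x. ennreal (Z x * max (- X x) 0) \<partial>M)
               in if p = \<infinity> \<and> n = \<infinity> then - \<infinity> else enn2ereal p - enn2ereal n)"

definition L1s :: "'a measure \<Rightarrow> ('a \<Rightarrow> real) set \<Rightarrow> ('a \<Rightarrow> real) set" where
  "L1s M C = {X \<in> borel_measurable M.
     (\<lambda>n::nat. SUP Z\<in>C. \<integral>\<^sup>+ x. ennreal (Z x * \<bar>X x\<bar> * indicator {y. \<bar>X y\<bar> > real n} x) \<partial>M)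
       \<longlonglongrightarrow> 0}"

text \<open>Coherent utility on L^0 (values on L^0 only matter).\<close>
definition coherent_utility :: "'a measure \<Rightarrow> (('a \<Rightarrow> real) \<Rightarrow> ereal) \<Rightarrow> bool" where
  "coherent_utility M u \<longleftrightarrow> (\<exists>D0. D0 \<noteq> {} \<and> (\<forall>Z\<in>D0. dens M Z) \<and>
      (\<forall>X\<in>borel_measurable M. u X = (INF Z\<in>D0. EQ M Z X)))"

definition determining_set :: "'a measure \<Rightarrow> (('a \<Rightarrow> real) \<Rightarrow> ereal) \<Rightarrow> ('a \<Rightarrow> real) set" where
  "determining_set M u = {Z. dens M Z \<and> (\<forall>X\<in>borel_measurable M. u X \<le> EQ M Z X)}"

definition sigY :: "'a measure \<Rightarrow> ('a \<Rightarrow> 'b::euclidean_space) \<Rightarrow> 'a measure" where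
  "sigY M Y = vimage_algebra (space M) Y borel"

definition condE :: "'a measure \<Rightarrow> ('a \<Rightarrow> 'b::euclidean_space) \<Rightarrow> ('a \<Rightarrow> real) \<Rightarrow> ('a \<Rightarrow> real)" where
  "condE M Y X = real_cond_exp M (sigY M Y) X"

definition condE_set :: "'a measure \<Rightarrow> ('a \<Rightarrow> 'b::euclidean_space) \<Rightarrow> ('a \<Rightarrow> real) set \<Rightarrow> ('a \<Rightarrow> real) set" where
  "condE_set M Y D = condE M Y ` D"

definition factor_utility :: "'a measure \<Rightarrow> ('a \<Rightarrow> real) set \<Rightarrow> ('a \<Rightarrow> real) \<Rightarrow> ('a \<Rightarrow> 'b::euclidean_space) \<Rightarrow> ereal" where
  "factor_utility M D X Y = (INF Z\<in>condE_set M Y D. EQ M Z X)"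

end

theory Submission
  imports Defs
begin

lemma EQ_integrable:
  assumes Zm[measurable]: "Z \<in> borel_measurable M" and Zp: "AE x in M. 0 \<le> Z x"
    and I: "integrable M (\<lambda>x. Z x * X x)"
  shows "EQ M Z X = ereal (\<integral>x. Z x * X x \<partial>M)"
proof -
  obtain r q where rq: "0 \<le> r" "0 \<le> q"
    "(\<integral>\<^sup>+x. ennreal (Z x * X x)\<partial>M) = ennreal r"
    "(\<integral>\<^sup>+x. ennreal (-(Z x * X x))\<partial>M) = ennreal q"
    "(\<lambda>x. Z x * X x) \<in> borel_measurable M"
    "(\<integral>x. Z x * X x \<partial>M) = r - q"
    by (rule integrableE[OF I])
  have e1: "ennreal (Z x * max (X x) 0) = ennreal (Z x * X x)" if "0 \<le> Z x" for x
    using that by (cases "X x \<ge> 0") (auto simp: ennreal_neg mult_nonneg_nonpos max_def)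
  have e2: "ennreal (Z x * max (- X x) 0) = ennreal (-(Z x * X x))" if "0 \<le> Z x" for x
    using that by (cases "X x \<ge> 0") (auto simp: ennreal_neg mult_nonneg_nonpos max_def)
  have p: "(\<integral>\<^sup>+ x. ennreal (Z x * max (X x) 0) \<partial>M) = ennreal r"
    unfolding rq(3)[symmetric]
    by (rule nn_integral_cong_AE) (use Zp e1 in auto)
  have n: "(\<integral>\<^sup>+ x. ennreal (Z x * max (- X x) 0) \<partial>M) = ennreal q"
    unfolding rq(4)[symmetric]
    by (rule nn_integral_cong_AE) (use Zp e2 in auto)
  show ?thesis unfolding EQ_def Let_def p n using rq(1,2,6) by simp
qed


lemma L1s_fin:
  assumes "X \<in> L1s M C" "W \<in> C" and Wm[measurable]: "W \<in> borel_measurable M"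
    and Wf: "(\<integral>\<^sup>+ x. ennreal (W x) \<partial>M) < \<infinity>"
  shows "(\<integral>\<^sup>+ x. ennreal (W x * \<bar>X x\<bar>) \<partial>M) < \<infinity>"
proof -
  have Xm[measurable]: "X \<in> borel_measurable M" and
    lim: "(\<lambda>n::nat. SUP Z\<in>C. \<integral>\<^sup>+ x. ennreal (Z x * \<bar>X x\<bar> * indicator {y. \<bar>X y\<bar> > real n} x) \<partial>M)
       \<longlonglongrightarrow> 0"
    using assms(1) unfolding L1s_def by auto
  have "eventually (\<lambda>n::nat. (SUP Z\<in>C. \<integral>\<^sup>+ x. ennreal (Z x * \<bar>X x\<bar> * indicator {y. \<bar>X y\<bar> > real n} x) \<partial>M) < 1) sequentially"
    using order_tendstoD(2)[OF lim] by simp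
  then obtain n :: nat where n: "(SUP Z\<in>C. \<integral>\<^sup>+ x. ennreal (Z x * \<bar>X x\<bar> * indicator {y. \<bar>X y\<bar> > real n} x) \<partial>M) < 1"
    by (auto simp: eventually_sequentially)
  have A: "(\<integral>\<^sup>+ x. ennreal (W x * \<bar>X x\<bar> * indicator {y. \<bar>X y\<bar> > real n} x) \<partial>M) < 1"
    using SUP_upper[OF assms(2)] n by (rule le_less_trans)
  have pw: "ennreal (W x * \<bar>X x\<bar>) \<le> ennreal (W x * \<bar>X x\<bar> * indicator {y. \<bar>X y\<bar> > real n} x) + ennreal (real n) * ennreal (W x)" for x
  proof (cases "W x \<ge> 0")
    case False
    then have "W x * \<bar>X x\<bar> \<le> 0" by (simp add: mult_nonpos_nonneg)
    then show ?thesis by (simp add: ennreal_neg)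
  next
    case True
    show ?thesis
    proof (cases "\<bar>X x\<bar> > real n")
      case True
      then show ?thesis by (simp add: indicator_def)
    next
      case False
      then have "W x * \<bar>X x\<bar> \<le> real n * W x" using \<open>W x \<ge> 0\<close>
        by (metis mult.commute mult_left_mono not_less)
      then have "ennreal (W x * \<bar>X x\<bar>) \<le> ennreal (real n) * ennreal (W x)"
        using \<open>W x \<ge> 0\<close> by (metis ennreal_leI ennreal_mult of_nat_0_le_iff)
      then show ?thesis by (simp add: add_increasing)
    qed
  qed
  have "(\<integral>\<^sup>+ x. ennreal (W x * \<bar>X x\<bar>) \<partial>M) \<le> (\<integral>\<^sup>+ x. ennreal (W x * \<bar>X x\<bar> * indicator {y. \<bar>X y\<bar> > real n} x) + ennreal (real n) * ennreal (W x) \<partial>M)"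
    by (rule nn_integral_mono) (rule pw)
  also have "\<dots> = (\<integral>\<^sup>+ x. ennreal (W x * \<bar>X x\<bar> * indicator {y. \<bar>X y\<bar> > real n} x) \<partial>M) + ennreal (real n) * (\<integral>\<^sup>+ x. ennreal (W x) \<partial>M)"
    by (simp add: nn_integral_add nn_integral_cmult)
  also have "\<dots> < \<infinity>" using A Wf
    by (simp add: ennreal_mult_less_top less_top[symmetric] ennreal_mult_eq_top_iff) (metis ennreal_one_less_top less_trans order.strict_implies_not_eq)
  finally show ?thesis .
qed


lemma key:
  assumes SF: "sigma_finite_subalgebra M F"
    and Zm[measurable]: "Z \<in> borel_measurable M" and Zp: "\<And>x. x \<in> space M \<Longrightarrow> 0 \<le> Z x"
    and Zf: "(\<integral>\<^sup>+ x. ennreal (Z x) \<partial>M) < \<infinity>"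
    and XI: "integrable M X"
    and fin: "(\<integral>\<^sup>+ x. ennreal (real_cond_exp M F Z x * \<bar>X x\<bar>) \<partial>M) < \<infinity>"
  shows "EQ M (real_cond_exp M F Z) X = EQ M Z (real_cond_exp M F X)"
proof -
  interpret sigma_finite_subalgebra M F by (rule SF)
  have Xm[measurable]: "X \<in> borel_measurable M" using XI by auto
  define cZ where "cZ = real_cond_exp M F Z"
  define cX where "cX = real_cond_exp M F X"
  define nZ where "nZ = nn_cond_exp M F (\<lambda>x. ennreal (Z x))"
  define nX where "nX = nn_cond_exp M F (\<lambda>x. ennreal \<bar>X x\<bar>)"
  have [measurable]: "cZ \<in> borel_measurable M" "cX \<in> borel_measurable M"
    "cZ \<in> borel_measurable F" "cX \<in> borel_measurable F"
    "nZ \<in> borel_measurable M" "nX \<in> borel_measurable M"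
    "nZ \<in> borel_measurable F" "nX \<in> borel_measurable F"
    unfolding cZ_def cX_def nZ_def nX_def by auto
  have ZpAE: "AE x in M. 0 \<le> Z x" using Zp by auto
  have intZ: "integrable M Z" by (rule integrableI_nonneg) (use Zf ZpAE in auto)
  have cZpos: "AE x in M. 0 \<le> cZ x" unfolding cZ_def by (rule real_cond_exp_pos) (use ZpAE in auto)
  have i1: "integrable M (\<lambda>x. cZ x * X x)"
  proof (rule integrableI_bounded)
    have "(\<integral>\<^sup>+ x. ennreal (norm (cZ x * X x)) \<partial>M) = (\<integral>\<^sup>+ x. ennreal (cZ x * \<bar>X x\<bar>) \<partial>M)"
      by (rule nn_integral_cong_AE) (use cZpos in \<open>auto simp: abs_mult\<close>)
    then show "(\<integral>\<^sup>+ x. ennreal (norm (cZ x * X x)) \<partial>M) < \<infinity>" using fin unfolding cZ_def by simp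
  qed simp
  have m0: "AE x in M. nn_cond_exp M F (\<lambda>x. ennreal (- Z x)) x = nn_cond_exp M F (\<lambda>x. 0) x"
    by (rule nn_cond_exp_cong) (use Zp in \<open>auto simp: ennreal_neg\<close>)
  have m1: "AE x in M. (\<lambda>x. 0) x = nn_cond_exp M F (\<lambda>x. 0::ennreal) x"
    by (rule nn_cond_exp_F_meas) simp
  have "(\<integral>\<^sup>+ x. nZ x \<partial>M) = (\<integral>\<^sup>+ x. 1 * nZ x \<partial>M)" by simp
  also have "\<dots> = (\<integral>\<^sup>+ x. 1 * ennreal (Z x) \<partial>M)" unfolding nZ_def
    by (rule nn_cond_exp_intg) auto
  finally have "(\<integral>\<^sup>+ x. nZ x \<partial>M) \<noteq> \<infinity>" using Zf by simp
  then have nZfin: "AE x in M. nZ x \<noteq> \<infinity>" by (intro nn_integral_PInf_AE) auto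
  have nce: "AE x in M. ennreal (cZ x) = nZ x"
    using m0 m1 nZfin unfolding cZ_def nZ_def real_cond_exp_def
    by eventually_elim (auto simp: less_top[symmetric])
  have ncX: "AE x in M. ennreal \<bar>cX x\<bar> \<le> nX x"
    unfolding cX_def nX_def by (rule real_cond_exp_abs) simp
  have "(\<integral>\<^sup>+ x. ennreal (norm (Z x * cX x)) \<partial>M) \<le> (\<integral>\<^sup>+ x. ennreal (Z x) * nX x \<partial>M)"
  proof (rule nn_integral_mono_AE)
    show "AE x in M. ennreal (norm (Z x * cX x)) \<le> ennreal (Z x) * nX x"
      using ncX ZpAE
    proof eventually_elim
      case (elim x)
      then have "ennreal (norm (Z x * cX x)) = ennreal (Z x) * ennreal \<bar>cX x\<bar>"
        by (simp add: abs_mult ennreal_mult)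
      also have "\<dots> \<le> ennreal (Z x) * nX x" using elim by (intro mult_left_mono) auto
      finally show ?case .
    qed
  qed
  also have "\<dots> = (\<integral>\<^sup>+ x. nX x * ennreal (Z x) \<partial>M)" by (simp add: mult.commute)
  also have "\<dots> = (\<integral>\<^sup>+ x. nX x * nZ x \<partial>M)" unfolding nZ_def
    by (rule nn_cond_exp_intg[symmetric]) auto
  also have "\<dots> = (\<integral>\<^sup>+ x. nZ x * nX x \<partial>M)" by (simp add: mult.commute)
  also have "\<dots> = (\<integral>\<^sup>+ x. nZ x * ennreal \<bar>X x\<bar> \<partial>M)" unfolding nX_def
    by (rule nn_cond_exp_intg) auto
  also have "\<dots> = (\<integral>\<^sup>+ x. ennreal (cZ x * \<bar>X x\<bar>) \<partial>M)"
    by (rule nn_integral_cong_AE) (use nce cZpos in \<open>auto simp: ennreal_mult\<close>)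
  also have "\<dots> < \<infinity>" using fin unfolding cZ_def .
  finally have i2: "integrable M (\<lambda>x. Z x * cX x)" by (intro integrableI_bounded) auto
  have i2': "integrable M (\<lambda>x. cX x * Z x)" using i2 by (simp add: mult.commute)
  have "(\<integral>x. cZ x * X x \<partial>M) = (\<integral>x. cZ x * cX x \<partial>M)"
    unfolding cX_def by (rule real_cond_exp_intg(2)[symmetric]) (use i1 in auto)
  also have "\<dots> = (\<integral>x. cX x * cZ x \<partial>M)" by (simp add: mult.commute)
  also have "\<dots> = (\<integral>x. cX x * Z x \<partial>M)"
    unfolding cZ_def by (rule real_cond_exp_intg(2)) (use i2' in auto)
  also have "\<dots> = (\<integral>x. Z x * cX x \<partial>M)" by (simp add: mult.commute)
  finally have eq: "(\<integral>x. cZ x * X x \<partial>M) = (\<integral>x. Z x * cX x \<partial>M)" .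
  have "EQ M cZ X = ereal (\<integral>x. cZ x * X x \<partial>M)" by (rule EQ_integrable) (use cZpos i1 in auto)
  moreover have "EQ M Z cX = ereal (\<integral>x. Z x * cX x \<partial>M)" by (rule EQ_integrable) (use ZpAE i2 in auto)
  ultimately show ?thesis using eq unfolding cZ_def cX_def by simp
qed


theorem theorem3p3:
  fixes M :: "'a measure" and u :: "('a \<Rightarrow> real) \<Rightarrow> ereal"
    and Y :: "'a \<Rightarrow> 'b::euclidean_space" and X :: "'a \<Rightarrow> real"
  assumes "prob_space M"
    and "coherent_utility M u"
    and "D = determining_set M u"
    and "Y \<in> borel_measurable M"
    and "X \<in> L1s M D" and "X \<in> L1s M (condE_set M Y D)" and "integrable M X"
  shows "factor_utility M D X Y = u (condE M Y X)"
proof -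
  define F where "F = sigY M Y"
  have sub: "subalgebra M F"
    unfolding subalgebra_def F_def sigY_def
  proof
    show "space (vimage_algebra (space M) Y borel) = space M" by simp
    have "Y \<in> space M \<rightarrow> space borel" by simp
    then show "sets (vimage_algebra (space M) Y borel) \<subseteq> sets M"
      using measurable_sets[OF assms(4)] by (auto simp: sets_vimage_algebra2)
  qed
  have "finite_measure M" using assms(1) unfolding prob_space_def by auto
  then have FS: "finite_measure_subalgebra M F"
    unfolding finite_measure_subalgebra_def finite_measure_subalgebra_axioms_def using sub by auto
  then have SF: "sigma_finite_subalgebra M F" by (rule finite_measure_subalgebra_is_sigma_finite)
  interpret sigma_finite_subalgebra M F by (rule SF)
  have XI: "integrable M X" by fact
  have cond: "condE M Y W = real_cond_exp M F W" for W unfolding condE_def F_def ..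
  obtain D0 where D0: "D0 \<noteq> {}" "\<forall>Z\<in>D0. dens M Z"
      "\<forall>X\<in>borel_measurable M. u X = (INF Z\<in>D0. EQ M Z X)"
    using assms(2) unfolding coherent_utility_def by blast
  have D0D: "D0 \<subseteq> D"
  proof
    fix Z assume "Z \<in> D0"
    moreover have "u X' \<le> EQ M Z X'" if "X' \<in> borel_measurable M" for X'
      using D0(3) that \<open>Z \<in> D0\<close> using INF_lower[OF \<open>Z \<in> D0\<close>, of "\<lambda>Z. EQ M Z X'"] by simp
    ultimately show "Z \<in> D" using D0(2) unfolding assms(3) determining_set_def by auto
  qed
  have ueq: "u W = (INF Z\<in>D. EQ M Z W)" if W: "W \<in> borel_measurable M" for W
  proof (rule antisym)
    show "u W \<le> (INF Z\<in>D. EQ M Z W)"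
      using W unfolding assms(3) determining_set_def by (auto intro: INF_greatest)
    have "(INF Z\<in>D. EQ M Z W) \<le> (INF Z\<in>D0. EQ M Z W)" by (rule INF_superset_mono) (use D0D in auto)
    then show "(INF Z\<in>D. EQ M Z W) \<le> u W" using D0(3) W by simp
  qed
  have k: "EQ M (condE M Y Z) X = EQ M Z (condE M Y X)" if "Z \<in> D" for Z
  proof -
    have dZ: "dens M Z" using that unfolding assms(3) determining_set_def by auto
    then have Zm[measurable]: "Z \<in> borel_measurable M" and Zp: "\<And>x. x \<in> space M \<Longrightarrow> 0 \<le> Z x"
      and Z1: "(\<integral>\<^sup>+ x. ennreal (Z x) \<partial>M) = 1" unfolding dens_def by auto
    have ci: "integrable M (real_cond_exp M F Z)"
      by (rule real_cond_exp_int(1), rule integrableI_nonneg) (use Zp Z1 in auto)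
    have cf: "(\<integral>\<^sup>+ x. ennreal (real_cond_exp M F Z x) \<partial>M) < \<infinity>"
      using ci by (auto simp: less_top)
    have "(\<integral>\<^sup>+ x. ennreal (real_cond_exp M F Z x * \<bar>X x\<bar>) \<partial>M) < \<infinity>"
    proof (rule L1s_fin[OF assms(6)])
      show "real_cond_exp M F Z \<in> condE_set M Y D"
        unfolding condE_set_def cond using that by auto
    qed (use cf in auto)
    then show ?thesis unfolding cond
      by (intro key[OF SF Zm Zp _ XI]) (use Z1 in auto)
  qed
  have "factor_utility M D X Y = (INF Z\<in>D. EQ M (condE M Y Z) X)"
    unfolding factor_utility_def condE_set_def by (simp add: image_image)
  also have "\<dots> = (INF Z\<in>D. EQ M Z (condE M Y X))" by (rule INF_cong) (use k in auto)
  also have "\<dots> = u (condE M Y X)" by (rule ueq[symmetric]) (simp add: cond)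
  finally show ?thesis .
qed

end
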